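(* Let $G$ be a compact Hausdorff topological group and $p\colon E\to B$ a $G$-map of Hausdorff $G$-spaces. If $p(E^H)=B^H$ for all closed subgroups $H$ of $G$, then $\mathrm{secat}_G(p)\le\mathrm{cat}_G(B)$.
   Context: $X^H=\{x: hx=x\ \forall h\in H\}$. A $G$-homotopy is an equivariant homotopy with $G$ acting trivially on $I$. An invariant set $U\subseteq B$ is $G$-categorical if its inclusion is $G$-homotopic to a map with values in a single orbit; $\mathrm{cat}_G(B)$ is the least $k$ such that $B$ is covered by $k$ open $G$-categorical sets. $\mathrm{secat}_G(p)$ is the least $k$ such that $B$ is covered by $k$ invariant open sets $U_i$ each admitting a $G$-map $s\colon U_i\to E$ with $ps$ $G$-homotopic to the inclusion ($\infty$ if none). *)

theory Defs
  imports "HOL-Analysis.Analysis" "HOL-Algebra.Group" "HOL-Library.Extended_Nat"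
begin

definition topological_group :: "('g, 'm) monoid_scheme \<Rightarrow> 'g topology \<Rightarrow> bool" where
  "topological_group G T \<longleftrightarrow> group G \<and> topspace T = carrier G \<and>
     continuous_map (prod_topology T T) T (\<lambda>(x, y). x \<otimes>\<^bsub>G\<^esub> y) \<and>
     continuous_map T T (\<lambda>x. inv\<^bsub>G\<^esub> x)"

definition G_space :: "('g, 'm) monoid_scheme \<Rightarrow> 'g topology \<Rightarrow> 'x topology \<Rightarrow> ('g \<Rightarrow> 'x \<Rightarrow> 'x) \<Rightarrow> bool" where
  "G_space G T X a \<longleftrightarrow>
     continuous_map (prod_topology T X) X (\<lambda>(g, x). a g x) \<and>
     (\<forall>x \<in> topspace X. a \<one>\<^bsub>G\<^esub> x = x) \<and>
     (\<forall>g \<in> carrier G. \<forall>h \<in> carrier G. \<forall>x \<in> topspace X. a (g \<otimes>\<^bsub>G\<^esub> h) x = a g (a h x))"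

definition equivariant_on :: "('g, 'm) monoid_scheme \<Rightarrow> 'x set \<Rightarrow> ('g \<Rightarrow> 'x \<Rightarrow> 'x) \<Rightarrow> ('g \<Rightarrow> 'y \<Rightarrow> 'y) \<Rightarrow> ('x \<Rightarrow> 'y) \<Rightarrow> bool" where
  "equivariant_on G U a b f \<longleftrightarrow> (\<forall>g \<in> carrier G. \<forall>x \<in> U. f (a g x) = b g (f x))"

definition G_map :: "('g, 'm) monoid_scheme \<Rightarrow> 'x topology \<Rightarrow> ('g \<Rightarrow> 'x \<Rightarrow> 'x) \<Rightarrow> 'y topology \<Rightarrow> ('g \<Rightarrow> 'y \<Rightarrow> 'y) \<Rightarrow> ('x \<Rightarrow> 'y) \<Rightarrow> bool" where
  "G_map G X a Y b f \<longleftrightarrow> continuous_map X Y f \<and> equivariant_on G (topspace X) a b f"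

definition invariant :: "('g, 'm) monoid_scheme \<Rightarrow> ('g \<Rightarrow> 'x \<Rightarrow> 'x) \<Rightarrow> 'x set \<Rightarrow> bool" where
  "invariant G a U \<longleftrightarrow> (\<forall>g \<in> carrier G. \<forall>x \<in> U. a g x \<in> U)"

text \<open>G-homotopy of maps from the invariant subspace U of X into Y: a homotopy all of whose
  stages are equivariant (G acts trivially on the interval).\<close>
definition G_homotopic :: "('g, 'm) monoid_scheme \<Rightarrow> 'x topology \<Rightarrow> ('g \<Rightarrow> 'x \<Rightarrow> 'x) \<Rightarrow> 'x set \<Rightarrow>
    'y topology \<Rightarrow> ('g \<Rightarrow> 'y \<Rightarrow> 'y) \<Rightarrow> ('x \<Rightarrow> 'y) \<Rightarrow> ('x \<Rightarrow> 'y) \<Rightarrow> bool" where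
  "G_homotopic G X a U Y b f0 f1 \<longleftrightarrow>
     homotopic_with (\<lambda>k. equivariant_on G (topspace (subtopology X U)) a b k) (subtopology X U) Y f0 f1"

definition orbit_of :: "('g, 'm) monoid_scheme \<Rightarrow> ('g \<Rightarrow> 'x \<Rightarrow> 'x) \<Rightarrow> 'x \<Rightarrow> 'x set" where
  "orbit_of G a y = {a g y | g. g \<in> carrier G}"

definition fixed_set :: "'x topology \<Rightarrow> ('g \<Rightarrow> 'x \<Rightarrow> 'x) \<Rightarrow> 'g set \<Rightarrow> 'x set" where
  "fixed_set X a H = {x \<in> topspace X. \<forall>h \<in> H. a h x = x}"

definition G_categorical :: "('g, 'm) monoid_scheme \<Rightarrow> 'b topology \<Rightarrow> ('g \<Rightarrow> 'b \<Rightarrow> 'b) \<Rightarrow> 'b set \<Rightarrow> bool" where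
  "G_categorical G B b U \<longleftrightarrow> U \<subseteq> topspace B \<and> invariant G b U \<and>
     (\<exists>c y. y \<in> topspace B \<and> c ` U \<subseteq> orbit_of G b y \<and> G_homotopic G B b U B b id c)"

text \<open>Equivariant LS category (value \<infinity> if no finite cover exists).\<close>
definition cat_G :: "('g, 'm) monoid_scheme \<Rightarrow> 'b topology \<Rightarrow> ('g \<Rightarrow> 'b \<Rightarrow> 'b) \<Rightarrow> enat" where
  "cat_G G B b = Inf {enat k | k. \<exists>Us :: nat \<Rightarrow> 'b set.
      (\<forall>i < k. openin B (Us i) \<and> G_categorical G B b (Us i)) \<and> (\<Union>i<k. Us i) = topspace B}"

definition secat_G :: "('g, 'm) monoid_scheme \<Rightarrow> 'e topology \<Rightarrow> ('g \<Rightarrow> 'e \<Rightarrow> 'e) \<Rightarrow>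
    'b topology \<Rightarrow> ('g \<Rightarrow> 'b \<Rightarrow> 'b) \<Rightarrow> ('e \<Rightarrow> 'b) \<Rightarrow> enat" where
  "secat_G G E e B b p = Inf {enat k | k. \<exists>Us :: nat \<Rightarrow> 'b set.
      (\<forall>i < k. openin B (Us i) \<and> invariant G b (Us i) \<and>
         (\<exists>s. G_map G (subtopology B (Us i)) b E e s \<and> G_homotopic G B b (Us i) B b (p \<circ> s) id)) \<and>
      (\<Union>i<k. Us i) = topspace B}"

end

theory Submission
  imports Defs
begin

lemma key:
  fixes G :: "'g monoid" and T :: "'g topology"
    and E :: "'e topology" and e :: "'g \<Rightarrow> 'e \<Rightarrow> 'e"
    and B :: "'b topology" and b :: "'g \<Rightarrow> 'b \<Rightarrow> 'b"
    and p :: "'e \<Rightarrow> 'b"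
  assumes TG: "topological_group G T" and cT: "compact_space T"
    and GE: "G_space G T E e"
    and GB: "G_space G T B b" and HB: "Hausdorff_space B"
    and pm: "G_map G E e B b p"
    and fixH: "\<And>H. subgroup H G \<Longrightarrow> closedin T H \<Longrightarrow> p ` fixed_set E e H = fixed_set B b H"
    and cat: "G_categorical G B b U"
  shows "\<exists>s. G_map G (subtopology B U) b E e s \<and> G_homotopic G B b U B b (p \<circ> s) id"
proof -
  have grp: "group G" and tsT: "topspace T = carrier G" using TG by (auto simp: topological_group_def)
  have actB: "continuous_map (prod_topology T B) B (\<lambda>(g, x). b g x)"
    and oneB: "\<And>x. x \<in> topspace B \<Longrightarrow> b \<one>\<^bsub>G\<^esub> x = x"
    and mulB: "\<And>g h x. g \<in> carrier G \<Longrightarrow> h \<in> carrier G \<Longrightarrow> x \<in> topspace B \<Longrightarrow> b (g \<otimes>\<^bsub>G\<^esub> h) x = b g (b h x)"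
    using GB by (auto simp: G_space_def)
  have actE: "continuous_map (prod_topology T E) E (\<lambda>(g, x). e g x)"
    and mulE: "\<And>g h x. g \<in> carrier G \<Longrightarrow> h \<in> carrier G \<Longrightarrow> x \<in> topspace E \<Longrightarrow> e (g \<otimes>\<^bsub>G\<^esub> h) x = e g (e h x)"
    using GE by (auto simp: G_space_def)
  have pc: "continuous_map E B p" and peq: "\<And>g x. g \<in> carrier G \<Longrightarrow> x \<in> topspace E \<Longrightarrow> p (e g x) = b g (p x)"
    using pm by (auto simp: G_map_def equivariant_on_def)
  obtain c y where Usub: "U \<subseteq> topspace B" and y: "y \<in> topspace B" and cU: "c ` U \<subseteq> orbit_of G b y"
    and hom: "G_homotopic G B b U B b id c"
    using cat by (auto simp: G_categorical_def)
  have tsU: "topspace (subtopology B U) = U" using Usub by auto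
  have hom': "homotopic_with (\<lambda>k. equivariant_on G U b b k) (subtopology B U) B c id"
    using hom tsU by (simp add: G_homotopic_def homotopic_with_sym)
  have cc: "continuous_map (subtopology B U) B c"
    using homotopic_with_imp_continuous_maps[OF hom'] by simp
  have ceq: "equivariant_on G U b b c"
    using homotopic_with_imp_property[OF hom'] by simp
  have orbc: "continuous_map T B (\<lambda>g. b g y)"
  proof -
    have "continuous_map T (prod_topology T B) (\<lambda>g. (g,y))"
      by (simp add: continuous_map_paired y)
    from continuous_map_compose[OF this actB] show ?thesis by (simp add: o_def)
  qed
  have orbB: "\<And>g. g \<in> carrier G \<Longrightarrow> b g y \<in> topspace B"
    using orbc tsT by (metis continuous_map_image_subset_topspace image_subset_iff)
  define H where "H = {g \<in> carrier G. b g y = y}"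
  have subH: "subgroup H G"
  proof
    show "H \<subseteq> carrier G" by (auto simp: H_def)
    show "\<one>\<^bsub>G\<^esub> \<in> H" using oneB y grp by (auto simp: H_def group.is_monoid monoid.one_closed)
    fix g h assume "g \<in> H" "h \<in> H"
    then show "g \<otimes>\<^bsub>G\<^esub> h \<in> H" using mulB y grp by (auto simp: H_def group.is_monoid monoid.m_closed)
  next
    fix g assume g: "g \<in> H"
    then have gc: "g \<in> carrier G" and gy: "b g y = y" by (auto simp: H_def)
    have "b (inv\<^bsub>G\<^esub> g) y = b (inv\<^bsub>G\<^esub> g) (b g y)" using gy by simp
    also have "\<dots> = b (inv\<^bsub>G\<^esub> g \<otimes>\<^bsub>G\<^esub> g) y" using mulB gc y grp by (simp add: group.inv_closed)
    also have "\<dots> = y" using grp gc oneB y by (simp add: group.l_inv)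
    finally show "inv\<^bsub>G\<^esub> g \<in> H" using grp gc by (simp add: H_def group.inv_closed)
  qed
  have clH: "closedin T H"
  proof -
    have "closedin T {g \<in> topspace T. b g y \<in> {y}}"
      by (rule closedin_continuous_map_preimage[OF orbc closedin_Hausdorff_singleton[OF HB y]])
    then show ?thesis by (simp add: H_def tsT)
  qed
  have "y \<in> fixed_set B b H" using y by (auto simp: fixed_set_def H_def)
  then obtain x where xf: "x \<in> fixed_set E e H" and pxy: "p x = y"
    using fixH[OF subH clH] by (metis imageE)
  have xE: "x \<in> topspace E" and xH: "\<And>h. h \<in> H \<Longrightarrow> e h x = x" using xf by (auto simp: fixed_set_def)
  define s' where "s' z = e (SOME g. g \<in> carrier G \<and> b g y = z) x" for z
  have s'eq: "s' (b g y) = e g x" if gc: "g \<in> carrier G" for g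
  proof -
    have "\<exists>h. h \<in> carrier G \<and> b h y = b g y" using gc by blast
    then obtain h where hc: "h \<in> carrier G" and hy: "b h y = b g y" and sh: "s' (b g y) = e h x"
      unfolding s'_def by (metis (mono_tags, lifting) someI_ex)
    have ic: "inv\<^bsub>G\<^esub> h \<in> carrier G" using grp hc by (simp add: group.inv_closed)
    have "b (inv\<^bsub>G\<^esub> h \<otimes>\<^bsub>G\<^esub> g) y = b (inv\<^bsub>G\<^esub> h) (b h y)" using mulB ic gc y hy by simp
    also have "\<dots> = b (inv\<^bsub>G\<^esub> h \<otimes>\<^bsub>G\<^esub> h) y" using mulB ic hc y by simp
    also have "\<dots> = y" using grp hc oneB y by (simp add: group.l_inv)
    finally have "inv\<^bsub>G\<^esub> h \<otimes>\<^bsub>G\<^esub> g \<in> H"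
      using grp ic gc by (simp add: H_def group.is_monoid monoid.m_closed)
    then have fx: "e (inv\<^bsub>G\<^esub> h \<otimes>\<^bsub>G\<^esub> g) x = x" by (rule xH)
    have "e g x = e (h \<otimes>\<^bsub>G\<^esub> (inv\<^bsub>G\<^esub> h \<otimes>\<^bsub>G\<^esub> g)) x"
      using grp hc gc ic by (simp add: group.inv_solve_left' group.is_monoid monoid.m_assoc[symmetric] group.r_inv)
    also have "\<dots> = e h x" using mulE hc ic gc xE fx grp by (simp add: group.is_monoid monoid.m_closed)
    finally show ?thesis using sh by simp
  qed
  define Orb where "Orb = orbit_of G b y"
  have OB: "Orb \<subseteq> topspace B" using orbB by (auto simp: Orb_def orbit_of_def)
  have ec: "continuous_map T E (\<lambda>g. e g x)"
  proof -
    have "continuous_map T (prod_topology T E) (\<lambda>g. (g,x))"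
      by (simp add: continuous_map_paired xE)
    from continuous_map_compose[OF this actE] show ?thesis by (simp add: o_def)
  qed
  have eE: "e g x \<in> topspace E" if "g \<in> carrier G" for g
    using ec that tsT by (metis continuous_map_image_subset_topspace image_subset_iff)
  have s'c: "continuous_map (subtopology B Orb) E s'"
  proof (rule continuous_map_closedin[THEN iffD2], intro conjI allI impI)
    show "s' \<in> topspace (subtopology B Orb) \<rightarrow> topspace E"
    proof
      fix z assume "z \<in> topspace (subtopology B Orb)"
      then have "z \<in> Orb" by simp
      then obtain g where g: "g \<in> carrier G" "z = b g y" by (auto simp: Orb_def orbit_of_def)
      show "s' z \<in> topspace E" using g s'eq eE by simp
    qed
  next
    fix C assume C: "closedin E C"
    have cl1: "closedin T {g \<in> topspace T. e g x \<in> C}"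
      by (rule closedin_continuous_map_preimage[OF ec C])
    have cp: "compactin B ((\<lambda>g. b g y) ` {g \<in> topspace T. e g x \<in> C})"
      by (rule image_compactin[OF closedin_compact_space[OF cT cl1] orbc])
    have cl2: "closedin B ((\<lambda>g. b g y) ` {g \<in> topspace T. e g x \<in> C})"
      by (rule compactin_imp_closedin[OF HB cp])
    have eqset: "{z \<in> topspace (subtopology B Orb). s' z \<in> C} = (\<lambda>g. b g y) ` {g \<in> topspace T. e g x \<in> C}"
    proof (intro equalityI subsetI)
      fix z assume "z \<in> {z \<in> topspace (subtopology B Orb). s' z \<in> C}"
      then have zO: "z \<in> Orb" and zC: "s' z \<in> C" by auto
      then obtain g where g: "g \<in> carrier G" "z = b g y" by (auto simp: Orb_def orbit_of_def)
      then have "e g x \<in> C" using zC s'eq by simp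
      then show "z \<in> (\<lambda>g. b g y) ` {g \<in> topspace T. e g x \<in> C}" using g tsT by blast
    next
      fix z assume "z \<in> (\<lambda>g. b g y) ` {g \<in> topspace T. e g x \<in> C}"
      then obtain g where g: "g \<in> carrier G" "e g x \<in> C" "z = b g y" using tsT by auto
      then have "z \<in> topspace B" "z \<in> Orb" "s' z \<in> C" using orbB s'eq by (auto simp: Orb_def orbit_of_def)
      then show "z \<in> {z \<in> topspace (subtopology B Orb). s' z \<in> C}" by simp
    qed
    have sub: "(\<lambda>g. b g y) ` {g \<in> topspace T. e g x \<in> C} \<subseteq> Orb"
      using tsT by (auto simp: Orb_def orbit_of_def)
    show "closedin (subtopology B Orb) {z \<in> topspace (subtopology B Orb). s' z \<in> C}"
      unfolding eqset using cl2 sub by (simp add: closedin_subset_topspace)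
  qed
  define s where "s = s' \<circ> c"
  have cO: "continuous_map (subtopology B U) (subtopology B Orb) c"
  proof -
    have "c \<in> topspace (subtopology B U) \<rightarrow> Orb" using cU tsU unfolding Orb_def by (simp add: Pi_iff image_subset_iff)
    then show ?thesis by (simp add: continuous_map_in_subtopology cc)
  qed
  have sc: "continuous_map (subtopology B U) E s"
    unfolding s_def by (rule continuous_map_compose[OF cO s'c])
  have cform: "\<exists>h. h \<in> carrier G \<and> c u = b h y" if "u \<in> U" for u
    using cU that unfolding orbit_of_def by blast
  have seqv: "equivariant_on G U b e s"
    unfolding equivariant_on_def
  proof (intro ballI)
    fix g u assume gc: "g \<in> carrier G" and u: "u \<in> U"
    obtain h where hc: "h \<in> carrier G" and ch: "c u = b h y" using cform[OF u] by blast
    have "s (b g u) = s' (b g (c u))" using ceq gc u by (simp add: s_def equivariant_on_def)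
    also have "\<dots> = s' (b (g \<otimes>\<^bsub>G\<^esub> h) y)" using mulB gc hc y ch by simp
    also have "\<dots> = e (g \<otimes>\<^bsub>G\<^esub> h) x" using s'eq grp gc hc by (simp add: group.is_monoid monoid.m_closed)
    also have "\<dots> = e g (e h x)" using mulE gc hc xE by simp
    also have "\<dots> = e g (s u)" using s'eq hc ch by (simp add: s_def)
    finally show "s (b g u) = e g (s u)" .
  qed
  have ps: "(p \<circ> s) u = c u" if u: "u \<in> U" for u
  proof -
    obtain h where hc: "h \<in> carrier G" and ch: "c u = b h y" using cform[OF u] by blast
    have "(p \<circ> s) u = p (s' (b h y))" using ch by (simp add: s_def)
    also have "\<dots> = p (e h x)" using s'eq[OF hc] by (rule arg_cong)
    also have "\<dots> = b h (p x)" by (rule peq[OF hc xE])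
    also have "\<dots> = c u" using pxy ch by simp
    finally show ?thesis .
  qed
  have pseqv: "equivariant_on G U b b (p \<circ> s)"
    unfolding equivariant_on_def
  proof (intro ballI)
    fix g u assume gc: "g \<in> carrier G" and u: "u \<in> U"
    have "s u \<in> topspace E" using sc u tsU by (metis continuous_map_image_subset_topspace image_subset_iff)
    moreover have "s (b g u) = e g (s u)" using seqv gc u unfolding equivariant_on_def by blast
    ultimately show "(p \<circ> s) (b g u) = b g ((p \<circ> s) u)"
      using peq[OF gc] by simp
  qed
  have h1: "homotopic_with (\<lambda>k. equivariant_on G U b b k) (subtopology B U) B (p \<circ> s) c"
    by (rule homotopic_with_equal[where P="\<lambda>k. equivariant_on G U b b k", OF pseqv ceq continuous_map_compose[OF sc pc]]) (metis ps tsU)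
  have "homotopic_with (\<lambda>k. equivariant_on G U b b k) (subtopology B U) B (p \<circ> s) id"
    by (rule homotopic_with_trans[OF h1 hom'])
  then have "G_homotopic G B b U B b (p \<circ> s) id" using tsU by (simp add: G_homotopic_def)
  moreover have "G_map G (subtopology B U) b E e s" using sc seqv tsU by (simp add: G_map_def)
  ultimately show ?thesis by blast
qed

theorem proposition4p5:
  fixes G :: "'g monoid" and T :: "'g topology"
    and E :: "'e topology" and e :: "'g \<Rightarrow> 'e \<Rightarrow> 'e"
    and B :: "'b topology" and b :: "'g \<Rightarrow> 'b \<Rightarrow> 'b"
    and p :: "'e \<Rightarrow> 'b"
  assumes "topological_group G T" and "compact_space T" and "Hausdorff_space T"
    and "G_space G T E e" and "Hausdorff_space E"
    and "G_space G T B b" and "Hausdorff_space B"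
    and "G_map G E e B b p"
    and "\<And>H. subgroup H G \<Longrightarrow> closedin T H \<Longrightarrow> p ` fixed_set E e H = fixed_set B b H"
  shows "secat_G G E e B b p \<le> cat_G G B b"
proof -
  have K: "\<And>U. G_categorical G B b U \<Longrightarrow>
     \<exists>s. G_map G (subtopology B U) b E e s \<and> G_homotopic G B b U B b (p \<circ> s) id"
    by (rule key[OF assms(1,2,4,6,7,8,9)])
  show ?thesis
    unfolding secat_G_def cat_G_def
  proof (rule Inf_superset_mono, safe)
    fix k :: nat and Us assume hk: "\<forall>i<k. openin B (Us i) \<and> G_categorical G B b (Us i)" and "(\<Union>i<k. Us i) = topspace B"
    show "\<exists>k' . enat k = enat k' \<and> (\<exists>Us :: nat \<Rightarrow> 'b set.
      (\<forall>i < k'. openin B (Us i) \<and> invariant G b (Us i) \<and>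
         (\<exists>s. G_map G (subtopology B (Us i)) b E e s \<and> G_homotopic G B b (Us i) B b (p \<circ> s) id)) \<and>
      (\<Union>i<k'. Us i) = topspace B)"
    proof (intro exI conjI)
      show "enat k = enat k" ..
    next
      show "\<forall>i<k. openin B (Us i) \<and> invariant G b (Us i) \<and>
         (\<exists>s. G_map G (subtopology B (Us i)) b E e s \<and> G_homotopic G B b (Us i) B b (p \<circ> s) id)"
      proof (intro allI impI conjI)
        fix i assume "i < k"
        then have "openin B (Us i)" and gc: "G_categorical G B b (Us i)" using hk by auto
        then show "openin B (Us i)" "invariant G b (Us i)"
          "\<exists>s. G_map G (subtopology B (Us i)) b E e s \<and> G_homotopic G B b (Us i) B b (p \<circ> s) id"
          using K[OF gc] by (auto simp: G_categorical_def)
      qed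
    next
      show "(\<Union>i<k. Us i) = topspace B" by fact
    qed
  qed
qed

end
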